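(* Let $z,r,z',r'$ be real numbers with $z^2+r^2\le1$ and $z'^2+r'^2\le 1$, and set $$\rho=\frac12\begin{pmatrix}1+z & r\\ r & 1-z\end{pmatrix},\qquad \rho'=\frac12\begin{pmatrix}1+z' & r'\\ r' & 1-z'\end{pmatrix}.$$ Then there exists an incoherent operation (IO) $\Lambda$ with $\Lambda(\rho)=\rho'$ if and only if $$(1-z^2)\,r'^2\le (1-z'^2)\,r^2\qquad\text{and}\qquad |r'|\le |r|$$ (for $r\neq0$ the first condition reads $z'^2+(1-z^2)\,r'^2/r^2\le 1$). The same characterization holds with IO replaced by strictly incoherent operation (SIO).
   Context: Fix the computational (incoherent) basis $\{|0\rangle,|1\rangle\}$ of $\mathbb{C}^2$; a state is incoherent if it is diagonal in this basis. An incoherent operation (IO) is a quantum channel with Kraus operators $\{K_n\}$, $\sum_n K_n^\dagger K_n=I$, such that $K_n\delta K_n^\dagger$ is diagonal for every diagonal $\delta$ (equivalently, each $K_n$ has at most one nonzero entry in every column). A strictly incoherent operation (SIO) is an IO whose Kraus operators additionally satisfy that $K_n^\dagger\delta K_n$ is diagonal for every diagonal $\delta$ (equivalently, each $K_n$ has at most one nonzero entry in every row and every column). *)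

theory Defs
  imports "HOL-Analysis.Analysis"
begin

type_synonym cmat2 = "complex^2^2"

definition mat2 :: "complex \<Rightarrow> complex \<Rightarrow> complex \<Rightarrow> complex \<Rightarrow> cmat2" where
  "mat2 a b c d = (\<chi> i j. if i = 0 then (if j = 0 then a else b) else (if j = 0 then c else d))"

definition cadj :: "cmat2 \<Rightarrow> cmat2" where
  "cadj A = (\<chi> i j. cnj (A $ j $ i))"

definition is_diag :: "cmat2 \<Rightarrow> bool" where
  "is_diag A \<longleftrightarrow> (\<forall>i j. i \<noteq> j \<longrightarrow> A $ i $ j = 0)"

definition is_kraus :: "cmat2 list \<Rightarrow> bool" where
  "is_kraus Ks \<longleftrightarrow> sum_list (map (\<lambda>K. cadj K ** K) Ks) = mat 1"

definition apply_kraus :: "cmat2 list \<Rightarrow> cmat2 \<Rightarrow> cmat2" where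
  "apply_kraus Ks \<rho> = sum_list (map (\<lambda>K. K ** \<rho> ** cadj K) Ks)"

definition IO :: "cmat2 list \<Rightarrow> bool" where
  "IO Ks \<longleftrightarrow> is_kraus Ks \<and>
     (\<forall>K \<in> set Ks. \<forall>\<delta>. is_diag \<delta> \<longrightarrow> is_diag (K ** \<delta> ** cadj K))"

definition SIO :: "cmat2 list \<Rightarrow> bool" where
  "SIO Ks \<longleftrightarrow> IO Ks \<and>
     (\<forall>K \<in> set Ks. \<forall>\<delta>. is_diag \<delta> \<longrightarrow> is_diag (cadj K ** \<delta> ** K))"

definition qubit :: "real \<Rightarrow> real \<Rightarrow> cmat2" where
  "qubit z r = mat2 (complex_of_real ((1 + z) / 2)) (complex_of_real (r / 2))
                    (complex_of_real (r / 2)) (complex_of_real ((1 - z) / 2))"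

end

theory Submission
  imports Defs
begin


lemma UNIV2': "(UNIV::2 set) = {0,1}"
  proof - have "(2::2) = 0" by simp then show ?thesis using UNIV_2 by auto qed

lemma sum2': "sum f (UNIV::2 set) = f 0 + f 1"
  unfolding UNIV2' by simp

lemma all2: "(\<forall>i::2. P i) \<longleftrightarrow> P 0 \<and> P 1"
  by (metis UNIV2' UNIV_I insertE singletonD)

lemma mat2_nth: "mat2 a b c d $ 0 $ 0 = a" "mat2 a b c d $ 0 $ 1 = b"
   "mat2 a b c d $ 1 $ 0 = c" "mat2 a b c d $ 1 $ 1 = d"
  by (simp_all add: mat2_def)

lemma mat2_eta: "A = mat2 (A$0$0) (A$0$1) (A$1$0) (A$1$1)"
  by (simp add: vec_eq_iff all2 mat2_nth)

lemma mat2_eq: "mat2 a b c d = mat2 a' b' c' d' \<longleftrightarrow> a = a' \<and> b = b' \<and> c = c' \<and> d = d'"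
  by (metis mat2_nth)

lemma mat2_mult: "mat2 a b c d ** mat2 e f g h = mat2 (a*e+b*g) (a*f+b*h) (c*e+d*g) (c*f+d*h)"
  by (simp add: vec_eq_iff all2 mat2_nth matrix_matrix_mult_def sum2')

lemma mat2_add: "mat2 a b c d + mat2 e f g h = mat2 (a+e) (b+f) (c+g) (d+h)"
  by (simp add: vec_eq_iff all2 mat2_nth)

lemma mat2_zero: "0 = mat2 0 0 0 0"
  by (simp add: vec_eq_iff all2 mat2_nth)

lemma mat2_one: "mat 1 = mat2 1 0 0 1"
  by (simp add: vec_eq_iff all2 mat2_nth mat_def)

lemma cadj_mat2: "cadj (mat2 a b c d) = mat2 (cnj a) (cnj c) (cnj b) (cnj d)"
  by (simp add: vec_eq_iff all2 mat2_nth cadj_def)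

lemma is_diag_mat2: "is_diag (mat2 a b c d) \<longleftrightarrow> b = 0 \<and> c = 0"
  unfolding is_diag_def all2 by (auto simp: mat2_nth)



lemma quad_nonneg:
  fixes p q h x y :: real
  assumes "0 \<le> p" "0 \<le> q" "h^2 \<le> p*q"
  shows "0 \<le> p*x^2 + q*y^2 + 2*h*x*y"
proof (cases "p = 0")
  case True
  then have "h = 0" using assms by simp
  then show ?thesis using True assms by simp
next
  case False
  then have pp: "p > 0" using assms by simp
  have "0 \<le> (p*x + h*y)^2 + (p*q - h^2)*y^2" using assms by (simp add: add_nonneg_nonneg)
  also have "\<dots> = p*(p*x^2 + q*y^2 + 2*h*x*y)" by (simp add: power2_eq_square algebra_simps)
  finally show ?thesis using pp by (simp add: zero_le_mult_iff)
qed

definition rho :: "real \<Rightarrow> real \<Rightarrow> real \<Rightarrow> cmat2" where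
  "rho p h q = mat2 (of_real p) (of_real h) (of_real h) (of_real q)"

lemma qubit_rho: "qubit z r = rho ((1+z)/2) (r/2) ((1-z)/2)"
  by (simp add: qubit_def rho_def)

lemma conj_entries:
  "mat2 a b c d ** rho p h q ** cadj (mat2 a b c d) =
   mat2 ((a * of_real p + b * of_real h)*cnj a + (a * of_real h + b * of_real q)*cnj b) ((a * of_real p + b * of_real h)*cnj c + (a * of_real h + b * of_real q)*cnj d)
        ((c * of_real p + d * of_real h)*cnj a + (c * of_real h + d * of_real q)*cnj b) ((c * of_real p + d * of_real h)*cnj c + (c * of_real h + d * of_real q)*cnj d)"
  by (simp add: rho_def mat2_mult cadj_mat2)

lemma P_nonneg:
  assumes "0 \<le> p" "0 \<le> q" "h^2 \<le> p*q"
  shows "0 \<le> Re ((a * of_real p + b * of_real h)*cnj a + (a * of_real h + b * of_real q)*cnj b)"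
proof -
  have "Re ((a * of_real p + b * of_real h)*cnj a + (a * of_real h + b * of_real q)*cnj b) =
     (p*(Re a)^2 + q*(Re b)^2 + 2*h*Re a*Re b) + (p*(Im a)^2 + q*(Im b)^2 + 2*h*Im a*Im b)"
    by (simp add: power2_eq_square algebra_simps)
  also have "0 \<le> \<dots>" using quad_nonneg[OF assms] by (simp add: add_nonneg_nonneg)
  finally show ?thesis .
qed

lemma cmod_sq: "(cmod a)^2 = (Re a)^2 + (Im a)^2"
  by (simp add: cmod_def)

lemma PQ_bound:
  assumes "0 \<le> p" "0 \<le> q" "h^2 \<le> p*q"
    and io: "(a = 0 \<or> c = 0) \<and> (b = 0 \<or> d = 0)"
  shows "p*q*(cmod (a*cnj d + b*cnj c))^2 \<le>
     Re ((a * of_real p + b * of_real h)*cnj a + (a * of_real h + b * of_real q)*cnj b) * Re ((c * of_real p + d * of_real h)*cnj c + (c * of_real h + d * of_real q)*cnj d)"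
proof -
  have P: "0 \<le> Re ((a * of_real p + b * of_real h)*cnj a + (a * of_real h + b * of_real q)*cnj b)" using P_nonneg[OF assms(1-3)] .
  have Q: "0 \<le> Re ((c * of_real p + d * of_real h)*cnj c + (c * of_real h + d * of_real q)*cnj d)" using P_nonneg[OF assms(1-3)] .
  from io consider "a = 0 \<and> b = 0" | "a = 0 \<and> d = 0" | "c = 0 \<and> b = 0" | "c = 0 \<and> d = 0" by blast
  then show ?thesis
  proof cases
    case 1 then show ?thesis using P Q by simp
  next
    case 2
    have e: "(cmod (a*cnj d + b*cnj c))^2 = ((Re b)^2+(Im b)^2)*((Re c)^2+(Im c)^2)"
      using 2 by (simp add: norm_mult power_mult_distrib cmod_sq)
    show ?thesis unfolding e using 2 by (simp add: power2_eq_square algebra_simps)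
  next
    case 3
    have e: "(cmod (a*cnj d + b*cnj c))^2 = ((Re a)^2+(Im a)^2)*((Re d)^2+(Im d)^2)"
      using 3 by (simp add: norm_mult power_mult_distrib cmod_sq)
    show ?thesis unfolding e using 3 by (simp add: power2_eq_square algebra_simps)
  next
    case 4 then show ?thesis using P Q by simp
  qed
qed

lemma offdiag:
  assumes io: "(a = 0 \<or> c = 0) \<and> (b = 0 \<or> d = 0)"
  shows "(a * of_real p + b * of_real h)*cnj c + (a * of_real h + b * of_real q)*cnj d = of_real h * (a*cnj d + b*cnj c)"
  using io by (auto simp: algebra_simps)

lemma cs_step:
  fixes s S p P q Q :: real
  assumes "0 \<le> s" "0 \<le> S" "0 \<le> p" "0 \<le> P" "0 \<le> q" "0 \<le> Q" "s^2 \<le> p*q" "S^2 \<le> P*Q"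
  shows "(s+S)^2 \<le> (p+P)*(q+Q)"
proof -
  have "s^2 * S^2 \<le> (p*q)*(P*Q)"
    using mult_mono[OF assms(7,8)] assms by simp
  also have "(p*q)*(P*Q) = (p*Q)*(q*P)" by (simp add: mult_ac)
  finally have 1: "(s*S)^2 \<le> (p*Q)*(q*P)" by (simp add: power_mult_distrib)
  have 2: "4*((p*Q)*(q*P)) \<le> (p*Q + q*P)^2"
    using sum_squares_ge_zero[of "p*Q - q*P" 0] by (simp add: power2_eq_square algebra_simps)
  have "(2*(s*S))^2 = 4*(s*S)^2" by (simp add: power_mult_distrib)
  with 1 2 have "(2*(s*S))^2 \<le> (p*Q + q*P)^2" by linarith
  then have 3: "2*(s*S) \<le> p*Q + q*P"
    by (rule power2_le_imp_le) (use assms in simp)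
  have "(s+S)^2 = s^2 + 2*(s*S) + S^2" by (simp add: power2_eq_square algebra_simps)
  moreover have "(p+P)*(q+Q) = p*q + (p*Q+q*P) + P*Q" by (simp add: algebra_simps)
  ultimately show ?thesis using 3 assms(7,8) by linarith
qed


lemma cs_list:
  fixes s P Q :: "'a \<Rightarrow> real"
  assumes "\<forall>x\<in>set xs. 0 \<le> s x \<and> 0 \<le> P x \<and> 0 \<le> Q x \<and> (s x)^2 \<le> P x * Q x"
  shows "(sum_list (map s xs))^2 \<le> sum_list (map P xs) * sum_list (map Q xs)"
  using assms
proof (induction xs)
  case Nil then show ?case by simp
next
  case (Cons x xs)
  have "0 \<le> sum_list (map s xs)" "0 \<le> sum_list (map P xs)" "0 \<le> sum_list (map Q xs)"
    using Cons.prems by (auto intro!: sum_list_nonneg)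
  then show ?case using Cons by (simp add: cs_step)
qed

lemma vec_sum_list: "(sum_list xs) $ i = sum_list (map (\<lambda>x. x $ i) xs)"
  by (induction xs) auto

lemma Re_sum_list: "Re (sum_list (map f xs)) = sum_list (map (\<lambda>x. Re (f x)) xs)"
  by (induction xs) auto

lemma norm_sum_list_le: "norm (sum_list (map f xs)) \<le> sum_list (map (\<lambda>x. norm (f x)) xs)"
proof (induction xs)
  case Nil then show ?case by simp
next
  case (Cons x xs) then show ?case using norm_triangle_ineq[of "f x" "sum_list (map f xs)"] by simp
qed

lemma sum_list_cmult: "sum_list (map (\<lambda>x. (c::complex) * f x) xs) = c * sum_list (map f xs)"
  by (induction xs) (auto simp: algebra_simps)

lemma io_constraint:
  assumes "\<forall>\<delta>. is_diag \<delta> \<longrightarrow> is_diag (K ** \<delta> ** cadj K)"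
  shows "(K$0$0 = 0 \<or> K$1$0 = 0) \<and> (K$0$1 = 0 \<or> K$1$1 = 0)"
proof -
  obtain a b c d where K: "K = mat2 a b c d" using mat2_eta by blast
  have d1: "is_diag (mat2 1 0 0 0)" and d2: "is_diag (mat2 0 0 0 1)" by (simp_all add: is_diag_mat2)
  have "is_diag (K ** mat2 1 0 0 0 ** cadj K)" using assms d1 by blast
  then have 1: "a * cnj c = 0"
    by (simp add: K mat2_mult cadj_mat2 is_diag_mat2)
  have "is_diag (K ** mat2 0 0 0 1 ** cadj K)" using assms d2 by blast
  then have 2: "b * cnj d = 0"
    by (simp add: K mat2_mult cadj_mat2 is_diag_mat2)
  show ?thesis using 1 2 by (simp add: K mat2_nth)
qed

lemma cs2:
  fixes a b c d :: real
  shows "(a*d + b*c)^2 \<le> (a^2 + c^2) * (d^2 + b^2)"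
proof -
  have "(a^2 + c^2) * (d^2 + b^2) - (a*d + b*c)^2 = (a*b - c*d)^2"
    by (simp add: power2_eq_square algebra_simps)
  then show ?thesis by (smt (verit) zero_le_power2)
qed

lemma c_bound:
  "(cmod (a*cnj d + b*cnj c))^2 \<le> ((cmod a)^2 + (cmod c)^2) * ((cmod b)^2 + (cmod d)^2)"
proof -
  have "cmod (a*cnj d + b*cnj c) \<le> cmod a * cmod d + cmod b * cmod c"
    using norm_triangle_ineq[of "a*cnj d" "b*cnj c"] by (simp add: norm_mult)
  then have "(cmod (a*cnj d + b*cnj c))^2 \<le> (cmod a * cmod d + cmod b * cmod c)^2"
    by (simp add: power_mono)
  also have "\<dots> \<le> ((cmod a)^2 + (cmod c)^2) * ((cmod d)^2 + (cmod b)^2)" by (rule cs2)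
  finally show ?thesis by (simp add: add.commute)
qed



lemma necessity:
  assumes hz: "z\<^sup>2 + r\<^sup>2 \<le> 1" and io: "IO Ks" and eq: "apply_kraus Ks (qubit z r) = qubit z' r'"
  shows "(1 - z\<^sup>2) * r'\<^sup>2 \<le> (1 - z'\<^sup>2) * r\<^sup>2 \<and> \<bar>r'\<bar> \<le> \<bar>r\<bar>"
proof -
  define p q hh where "p = (1+z)/2" and "q = (1-z)/2" and "hh = r/2"
  have z1: "z^2 \<le> 1" using hz by (smt (verit) zero_le_power2)
  then have "\<bar>z\<bar> \<le> 1" by (simp add: abs_square_le_1)
  then have p0: "0 \<le> p" and q0: "0 \<le> q" unfolding p_def q_def by auto
  have pq: "p*q = (1 - z^2)/4" unfolding p_def q_def by (simp add: power2_eq_square field_simps)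
  have hpq: "hh^2 \<le> p*q" unfolding pq hh_def using hz by (simp add: power_divide)
  have rho: "qubit z r = rho p hh q" unfolding qubit_rho p_def q_def hh_def ..
  define E where "E (K::cmat2) = K ** rho p hh q ** cadj K" for K
  define c where "c (K::cmat2) = K$0$0 * cnj (K$1$1) + K$0$1 * cnj (K$1$0)" for K
  define P where "P (K::cmat2) = Re (E K $ 0 $ 0)" for K
  define Q where "Q (K::cmat2) = Re (E K $ 1 $ 1)" for K
  define A where "A (K::cmat2) = (cmod (K$0$0))^2 + (cmod (K$1$0))^2" for K
  define B where "B (K::cmat2) = (cmod (K$0$1))^2 + (cmod (K$1$1))^2" for K
  have cons: "(K$0$0 = 0 \<or> K$1$0 = 0) \<and> (K$0$1 = 0 \<or> K$1$1 = 0)" if "K \<in> set Ks" for K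
    using io that unfolding IO_def by (intro io_constraint) blast
  have Eform: "E (mat2 a b cc d) = mat2 ((a * of_real p + b * of_real hh)*cnj a + (a * of_real hh + b * of_real q)*cnj b)
        ((a * of_real p + b * of_real hh)*cnj cc + (a * of_real hh + b * of_real q)*cnj d)
        ((cc * of_real p + d * of_real hh)*cnj a + (cc * of_real hh + d * of_real q)*cnj b)
        ((cc * of_real p + d * of_real hh)*cnj cc + (cc * of_real hh + d * of_real q)*cnj d)"
    for a b cc d
    unfolding E_def by (rule conj_entries)
  have off: "E K $ 0 $ 1 = of_real hh * c K" if "K \<in> set Ks" for K
  proof -
    obtain a b cc d where K: "K = mat2 a b cc d" using mat2_eta by blast
    show ?thesis using cons[OF that] offdiag[of a cc b d p hh q]
      by (simp add: Eform mat2_nth c_def K)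
  qed
  have PQ: "0 \<le> P K \<and> 0 \<le> Q K \<and> p*q*(cmod (c K))^2 \<le> P K * Q K" if "K \<in> set Ks" for K
  proof -
    obtain a b cc d where K: "K = mat2 a b cc d" using mat2_eta by blast
    show ?thesis using cons[OF that] PQ_bound[OF p0 q0 hpq, of a cc b d]
        P_nonneg[OF p0 q0 hpq, of a b] P_nonneg[OF p0 q0 hpq, of cc d]
      by (simp add: Eform mat2_nth c_def K P_def Q_def)
  qed
  have AB: "0 \<le> A K \<and> 0 \<le> B K \<and> (cmod (c K))^2 \<le> A K * B K" for K
  proof -
    obtain a b cc d where K: "K = mat2 a b cc d" using mat2_eta by blast
    show ?thesis using c_bound[of a d b cc]
      by (simp add: mat2_nth c_def K A_def B_def)
  qed
  have kr: "sum_list (map (\<lambda>K. cadj K ** K) Ks) = mat 1" using io unfolding IO_def is_kraus_def by blast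
  have CK: "(cadj K ** K)$0$0 = of_real (A K) \<and> (cadj K ** K)$1$1 = of_real (B K)" for K
  proof -
    obtain a b cc d where K: "K = mat2 a b cc d" using mat2_eta by blast
    have "cadj K ** K = mat2 (cnj a * a + cnj cc * cc) (cnj a * b + cnj cc * d) (cnj b * a + cnj d * cc) (cnj b * b + cnj d * d)"
      by (simp add: K cadj_mat2 mat2_mult)
    then show ?thesis using complex_norm_square[of a] complex_norm_square[of b]
        complex_norm_square[of cc] complex_norm_square[of d]
      by (simp add: mat2_nth A_def B_def K mult.commute)
  qed
  have SA: "sum_list (map A Ks) = 1 \<and> sum_list (map B Ks) = 1"
  proof -
    have "(sum_list (map (\<lambda>K. cadj K ** K) Ks))$0$0 = 1" "(sum_list (map (\<lambda>K. cadj K ** K) Ks))$1$1 = 1"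
      using kr by (simp_all add: mat2_one mat2_nth)
    then have "sum_list (map (\<lambda>K. of_real (A K)) Ks) = (1::complex)"
       "sum_list (map (\<lambda>K. of_real (B K)) Ks) = (1::complex)"
      by (simp_all add: vec_sum_list o_def CK)
    then have "Re (sum_list (map (\<lambda>K. of_real (A K)) Ks)) = 1"
       "Re (sum_list (map (\<lambda>K. of_real (B K)) Ks)) = 1" by simp_all
    then show ?thesis by (simp add: Re_sum_list)
  qed
  define S where "S = sum_list (map (\<lambda>K. cmod (c K)) Ks)"
  have S0: "0 \<le> S" unfolding S_def by (rule sum_list_nonneg) auto
  have "S^2 \<le> sum_list (map A Ks) * sum_list (map B Ks)"
    unfolding S_def using AB by (intro cs_list) auto
  then have "S^2 \<le> 1" using SA by simp
  then have S1: "S \<le> 1" using S0 by (simp add: power_le_one_iff abs_square_le_1)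
  have eq2: "sum_list (map E Ks) = qubit z' r'" using eq unfolding apply_kraus_def rho E_def .
  have e00: "sum_list (map (\<lambda>K. E K $0$0) Ks) = of_real ((1+z')/2)"
    using arg_cong[OF eq2, of "\<lambda>M. M$0$0"] by (simp add: vec_sum_list o_def qubit_def mat2_nth)
  have e11: "sum_list (map (\<lambda>K. E K $1$1) Ks) = of_real ((1-z')/2)"
    using arg_cong[OF eq2, of "\<lambda>M. M$1$1"] by (simp add: vec_sum_list o_def qubit_def mat2_nth)
  have e01: "sum_list (map (\<lambda>K. E K $0$1) Ks) = of_real (r'/2)"
    using arg_cong[OF eq2, of "\<lambda>M. M$0$1"] by (simp add: vec_sum_list o_def qubit_def mat2_nth)
  have sP: "sum_list (map P Ks) = (1+z')/2"
    using arg_cong[OF e00, of Re] by (simp add: Re_sum_list P_def[abs_def])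
  have sQ: "sum_list (map Q Ks) = (1-z')/2"
    using arg_cong[OF e11, of Re] by (simp add: Re_sum_list Q_def[abs_def])
  define C where "C = sum_list (map c Ks)"
  have "sum_list (map (\<lambda>K. E K $0$1) Ks) = sum_list (map (\<lambda>K. of_real hh * c K) Ks)"
    by (rule arg_cong[where f=sum_list], rule map_cong) (simp_all add: off)
  then have rC: "of_real (r'/2) = of_real hh * C" using e01 unfolding C_def sum_list_cmult by simp
  then have "cmod (of_real (r'/2)) = cmod (of_real hh * C)" by simp
  then have rr: "\<bar>r'\<bar> = \<bar>r\<bar> * cmod C" unfolding hh_def by (simp add: norm_mult)
  have CS: "cmod C \<le> S" unfolding C_def S_def using norm_sum_list_le[of c Ks] by simp
  have "(sqrt (p*q) * S)^2 \<le> sum_list (map P Ks) * sum_list (map Q Ks)"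
  proof -
    have "(sum_list (map (\<lambda>K. sqrt (p*q) * cmod (c K)) Ks))^2 \<le> sum_list (map P Ks) * sum_list (map Q Ks)"
    proof (intro cs_list ballI conjI)
      fix K assume K: "K \<in> set Ks"
      show "0 \<le> sqrt (p*q) * cmod (c K)" using p0 q0 by simp
      show "0 \<le> P K" "0 \<le> Q K" using PQ[OF K] by auto
      show "(sqrt (p*q) * cmod (c K))^2 \<le> P K * Q K"
        using PQ[OF K] p0 q0 by (simp add: power_mult_distrib)
    qed
    moreover have "sum_list (map (\<lambda>K. sqrt (p*q) * cmod (c K)) Ks) = sqrt (p*q) * S"
      unfolding S_def by (induction Ks) (auto simp: algebra_simps)
    ultimately show ?thesis by simp
  qed
  then have key: "p*q*S^2 \<le> (1+z')/2 * ((1-z')/2)" using sP sQ p0 q0 by (simp add: power_mult_distrib)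
  have "\<bar>r'\<bar> \<le> \<bar>r\<bar>" using rr CS S1 by (simp add: mult_left_le)
  moreover have "(1 - z\<^sup>2) * r'\<^sup>2 \<le> (1 - z'\<^sup>2) * r\<^sup>2"
  proof -
    have "r'^2 = r^2 * (cmod C)^2" using rr by (metis power2_abs power_mult_distrib)
    also have "\<dots> \<le> r^2 * S^2" using CS by (simp add: mult_left_mono power_mono)
    finally have "(1 - z^2) * r'^2 \<le> (1 - z^2) * (r^2 * S^2)" using z1 by (simp add: mult_left_mono)
    also have "\<dots> = 4 * r^2 * (p*q*S^2)" using pq by simp
    also have "\<dots> \<le> 4 * r^2 * ((1+z')/2 * ((1-z')/2))" using mult_left_mono[OF key, of "4*r^2"] by simp
    also have "\<dots> = (1 - z'^2) * r^2" by (simp add: power2_eq_square field_simps)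
    finally show ?thesis .
  qed
  ultimately show ?thesis by simp
qed



definition dop :: "real \<Rightarrow> real \<Rightarrow> cmat2" where
  "dop a b = mat2 (of_real a) 0 0 (of_real b)"
definition aop :: "real \<Rightarrow> real \<Rightarrow> cmat2" where
  "aop a b = mat2 0 (of_real b) (of_real a) 0"
definition fam where
  "fam a1 b1 a2 b2 a3 b3 a4 b4 = [dop a1 b1, aop a2 b2, dop a3 b3, aop a4 b4]"

lemma diag_form: "is_diag \<delta> \<Longrightarrow> \<delta> = mat2 (\<delta>$0$0) 0 0 (\<delta>$1$1)"
  using mat2_eta[of \<delta>] unfolding is_diag_def by (metis zero_neq_one)

lemma dop_ok: assumes "is_diag \<delta>" shows "is_diag (dop a b ** \<delta> ** cadj (dop a b)) \<and> is_diag (cadj (dop a b) ** \<delta> ** dop a b)"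
proof -
  obtain d0 d1 where D: "\<delta> = mat2 d0 0 0 d1" using diag_form[OF assms] by blast
  show ?thesis unfolding D by (simp add: dop_def mat2_mult cadj_mat2 is_diag_mat2)
qed

lemma aop_ok: assumes "is_diag \<delta>" shows "is_diag (aop a b ** \<delta> ** cadj (aop a b)) \<and> is_diag (cadj (aop a b) ** \<delta> ** aop a b)"
proof -
  obtain d0 d1 where D: "\<delta> = mat2 d0 0 0 d1" using diag_form[OF assms] by blast
  show ?thesis unfolding D by (simp add: aop_def mat2_mult cadj_mat2 is_diag_mat2)
qed

lemma fam_SIO:
  assumes "a1^2 + a2^2 + a3^2 + a4^2 = 1" "b1^2 + b2^2 + b3^2 + b4^2 = 1"
  shows "SIO (fam a1 b1 a2 b2 a3 b3 a4 b4)"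
proof -
  have k: "is_kraus (fam a1 b1 a2 b2 a3 b3 a4 b4)"
  proof -
    have "sum_list (map (\<lambda>K. cadj K ** K) (fam a1 b1 a2 b2 a3 b3 a4 b4)) =
       mat2 (of_real (a1^2 + a2^2 + a3^2 + a4^2)) 0 0 (of_real (b1^2 + b2^2 + b3^2 + b4^2))"
      by (simp add: fam_def dop_def aop_def mat2_mult cadj_mat2 mat2_add power2_eq_square add.assoc)
    then show ?thesis using assms by (simp add: is_kraus_def mat2_one)
  qed
  show ?thesis unfolding SIO_def IO_def using k dop_ok aop_ok by (simp add: fam_def)
qed

lemma dop_conj: "dop a b ** rho p h q ** cadj (dop a b) = mat2 (of_real (a*a*p)) (of_real (a*b*h)) (of_real (a*b*h)) (of_real (b*b*q))"
  by (simp add: dop_def rho_def mat2_mult cadj_mat2 mat2_eq)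

lemma aop_conj: "aop a b ** rho p h q ** cadj (aop a b) = mat2 (of_real (b*b*q)) (of_real (a*b*h)) (of_real (a*b*h)) (of_real (a*a*p))"
  by (simp add: aop_def rho_def mat2_mult cadj_mat2 mat2_eq mult_ac)

lemma fam_sum: "apply_kraus (fam a1 b1 a2 b2 a3 b3 a4 b4) (rho p h q) =
     mat2 (of_real (a1*a1*p + b2*b2*q + a3*a3*p + b4*b4*q)) (of_real ((a1*b1 + a2*b2 + a3*b3 + a4*b4)*h))
          (of_real ((a1*b1 + a2*b2 + a3*b3 + a4*b4)*h)) (of_real (b1*b1*q + a2*a2*p + b3*b3*q + a4*a4*p))"
  unfolding apply_kraus_def fam_def
  apply (simp add: dop_conj aop_conj mat2_add del: of_real_add of_real_mult)
  apply (simp only: of_real_add[symmetric] mat2_eq of_real_eq_iff)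
  apply (simp add: algebra_simps)
  done



lemma fam_apply:
  assumes A: "a1^2 + a2^2 + a3^2 + a4^2 = 1" and B: "b1^2 + b2^2 + b3^2 + b4^2 = 1"
    and Z: "(1+z')/2 = (a1^2+a3^2)*((1+z)/2) + (b2^2+b4^2)*((1-z)/2)"
    and R: "r' = r * (a1*b1 + a2*b2 + a3*b3 + a4*b4)"
  shows "apply_kraus (fam a1 b1 a2 b2 a3 b3 a4 b4) (qubit z r) = qubit z' r'"
proof -
  have e00: "a1*a1*((1+z)/2) + b2*b2*((1-z)/2) + a3*a3*((1+z)/2) + b4*b4*((1-z)/2) = (1+z')/2"
  proof -
    have "a1*a1*((1+z)/2) + b2*b2*((1-z)/2) + a3*a3*((1+z)/2) + b4*b4*((1-z)/2)
      = (a1^2+a3^2)*((1+z)/2) + (b2^2+b4^2)*((1-z)/2)" by (simp add: power2_eq_square field_simps)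
    then show ?thesis using Z by simp
  qed
  have e01: "(a1*b1 + a2*b2 + a3*b3 + a4*b4)*(r/2) = r'/2" using R by simp
  have e11: "b1*b1*((1-z)/2) + a2*a2*((1+z)/2) + b3*b3*((1-z)/2) + a4*a4*((1+z)/2) = (1-z')/2"
  proof -
    have "b1*b1*((1-z)/2) + a2*a2*((1+z)/2) + b3*b3*((1-z)/2) + a4*a4*((1+z)/2)
       = (b1^2+b3^2)*((1-z)/2) + (a2^2+a4^2)*((1+z)/2)" by (simp add: power2_eq_square field_simps)
    also have "\<dots> = (1 - b2^2 - b4^2)*((1-z)/2) + (1 - a1^2 - a3^2)*((1+z)/2)"
      using A B by (smt (verit))
    also have "\<dots> = 1 - ((a1^2+a3^2)*((1+z)/2) + (b2^2+b4^2)*((1-z)/2))" by (simp add: field_simps)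
    also have "\<dots> = (1-z')/2" using Z by simp
    finally show ?thesis .
  qed
  show ?thesis unfolding qubit_rho fam_sum
    by (simp only: e00 e01 e11 rho_def)
qed

lemma reach_r0:
  assumes "z'^2 \<le> 1"
  shows "\<exists>Ks. SIO Ks \<and> apply_kraus Ks (qubit z 0) = qubit z' 0"
proof -
  have "\<bar>z'\<bar> \<le> 1" using assms by (simp add: abs_square_le_1)
  then have p: "0 \<le> (1+z')/2" and q: "0 \<le> (1-z')/2" by auto
  define a where "a = sqrt ((1+z')/2)"
  define b where "b = sqrt ((1-z')/2)"
  have a2: "a^2 = (1+z')/2" using p unfolding a_def by simp
  have b2: "b^2 = (1-z')/2" using q unfolding b_def by simp
  have s1: "a^2 + b^2 + 0^2 + 0^2 = 1" "b^2 + a^2 + 0^2 + 0^2 = 1" using a2 b2 by simp_all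
  have "SIO (fam a b b a 0 0 0 0)" by (rule fam_SIO[OF s1])
  moreover have "apply_kraus (fam a b b a 0 0 0 0) (qubit z 0) = qubit z' 0"
    by (rule fam_apply[OF s1]) (simp_all add: a2 field_simps)
  ultimately show ?thesis by blast
qed



lemma reach_gen:
  fixes z r z' r' t x y u v :: real
  assumes pz: "0 < (1+z)/2" "0 < (1-z)/2"
  and xy: "x^2 + y^2 = (1+z)/2" and uv: "u^2 + v^2 = (1-z)/2" and xv: "x^2 + v^2 = (1+z')/2"
  and Wt: "\<bar>t\<bar> * sqrt ((1+z)/2 * ((1-z)/2)) \<le> x * u + y * v" and R: "r' = t * r"
  shows "\<exists>Ks. SIO Ks \<and> apply_kraus Ks (qubit z r) = qubit z' r'"
proof -
  define p q where "p = (1+z)/2" and "q = (1-z)/2"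
  have p0: "0 < p" and q0: "0 < q" using pz unfolding p_def q_def by auto
  define sp sq where "sp = sqrt p" and "sq = sqrt q"
  have sp0: "0 < sp" and sq0: "0 < sq" using p0 q0 unfolding sp_def sq_def by auto
  have sp2: "sp^2 = p" and sq2: "sq^2 = q" using p0 q0 unfolding sp_def sq_def by auto
  define m where "m = sp * sq"
  have m0: "0 < m" unfolding m_def using sp0 sq0 by simp
  have mdef: "sqrt ((1+z)/2 * ((1-z)/2)) = m" unfolding m_def sp_def sq_def p_def q_def
    by (simp only: real_sqrt_mult)
  define W where "W = x * u + y * v"
  have Wt': "\<bar>t\<bar> * m \<le> W" using Wt unfolding mdef W_def .
  have W0: "0 \<le> W" using Wt' m0 by (smt (verit) mult_nonneg_nonneg abs_ge_zero)
  define c where "c = (if W = 0 then 0 else t * m/W)"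
  have c1: "\<bar>c\<bar> \<le> 1"
  proof (cases "W = 0")
    case True then show ?thesis unfolding c_def by simp
  next
    case False
    then have "0 < W" using W0 by simp
    then show ?thesis unfolding c_def using False Wt' m0 by (simp add: abs_mult abs_divide)
  qed
  have cW: "c * W = t * m"
  proof (cases "W = 0")
    case True
    then have "\<bar>t\<bar> * m \<le> 0" using Wt' by simp
    then have "t = 0" using m0 by (smt (verit) mult_pos_pos abs_ge_zero zero_less_abs_iff)
    then show ?thesis using True unfolding c_def by simp
  next
    case False then show ?thesis unfolding c_def by simp
  qed
  define al be where "al = sqrt ((1+c)/2)" and "be = sqrt ((1-c)/2)"
  have al2: "al^2 = (1+c)/2" and be2: "be^2 = (1-c)/2" using c1 unfolding al_def be_def by auto
  have ab1: "al^2 + be^2 = 1" using al2 be2 by (simp add: field_simps)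
  define a1 b1 a2 b2 a3 b3 a4 b4 where "a1 = al * x/sp" and "b1 = al * u/sq" and "a2 = al * y/sp"
    and "b2 = al * v/sq" and "a3 = be * x/sp" and "b3 = -(be * u/sq)" and "a4 = be * y/sp" and "b4 = -(be * v/sq)"
  have A: "a1^2 + a2^2 + a3^2 + a4^2 = 1"
  proof -
    have "a1^2 + a2^2 + a3^2 + a4^2 = (al^2+be^2)*(x^2+y^2)/sp^2"
      unfolding a1_def a2_def a3_def a4_def using sp0 by (simp add: power_mult_distrib power_divide field_simps)
    then show ?thesis using ab1 sp2 xy p0 unfolding p_def by simp
  qed
  have B: "b1^2 + b2^2 + b3^2 + b4^2 = 1"
  proof -
    have "b1^2 + b2^2 + b3^2 + b4^2 = (al^2+be^2)*(u^2+v^2)/sq^2"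
      unfolding b1_def b2_def b3_def b4_def using sq0 by (simp add: power_mult_distrib power_divide field_simps)
    then show ?thesis using ab1 sq2 uv q0 unfolding q_def by simp
  qed
  have Z: "(1+z')/2 = (a1^2+a3^2)*((1+z)/2) + (b2^2+b4^2)*((1-z)/2)"
  proof -
    have "(a1^2+a3^2)*((1+z)/2) + (b2^2+b4^2)*((1-z)/2) = (al^2+be^2) * x^2*(p/sp^2) + (al^2+be^2) * v^2*(q/sq^2)"
      unfolding a1_def a3_def b2_def b4_def p_def[symmetric] q_def[symmetric]
      using sp0 sq0 by (simp add: power_mult_distrib power_divide field_simps)
    then show ?thesis using ab1 sp2 sq2 xv p0 q0 by simp
  qed
  have Rr: "r' = r * (a1 * b1 + a2 * b2 + a3 * b3 + a4 * b4)"
  proof -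
    have "a1 * b1 + a2 * b2 + a3 * b3 + a4 * b4 = (al^2 - be^2) * W / m"
      unfolding a1_def a2_def a3_def a4_def b1_def b2_def b3_def b4_def W_def m_def
      using sp0 sq0 by (simp add: power2_eq_square field_simps)
    also have "\<dots> = c * W / m" using al2 be2 by simp
    also have "\<dots> = t" using cW m0 by simp
    finally show ?thesis using R by simp
  qed
  show ?thesis using fam_SIO[OF A B] fam_apply[OF A B Z Rr] by blast
qed



lemma sufficiency:
  fixes z r z' r' :: real
  assumes hz: "z\<^sup>2 + r\<^sup>2 \<le> 1" and hz': "z'\<^sup>2 + r'\<^sup>2 \<le> 1"
    and c1: "(1 - z\<^sup>2) * r'\<^sup>2 \<le> (1 - z'\<^sup>2) * r\<^sup>2" and c2: "\<bar>r'\<bar> \<le> \<bar>r\<bar>"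
  shows "\<exists>Ks. SIO Ks \<and> apply_kraus Ks (qubit z r) = qubit z' r'"
proof (cases "r = 0")
  case True
  then have "r' = 0" using c2 by simp
  moreover have "z'^2 \<le> 1" using hz' by (smt (verit) zero_le_power2)
  ultimately show ?thesis using True reach_r0 by blast
next
  case False
  have r2: "0 < r^2" using False by simp
  have z1: "z^2 < 1" using hz r2 by linarith
  then have az: "\<bar>z\<bar> < 1" by (simp add: abs_square_less_1)
  have pz: "0 < (1+z)/2" "0 < (1-z)/2" using az by auto
  have z'1: "z'^2 \<le> 1" using hz' by (smt (verit) zero_le_power2)
  then have az': "\<bar>z'\<bar> \<le> 1" by (simp add: abs_square_le_1)
  define t where "t = r'/r"
  have R: "r' = t * r" unfolding t_def using False by simp
  have t1: "\<bar>t\<bar> \<le> 1" unfolding t_def using c2 False by (simp add: abs_divide divide_le_eq_1)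
  have tz: "t^2 * (1 - z^2) \<le> 1 - z'^2"
  proof -
    have "(t^2 * (1 - z^2)) * r^2 \<le> (1 - z'^2) * r^2"
      using c1 unfolding R by (simp add: power_mult_distrib mult_ac)
    then show ?thesis using r2 by simp
  qed
  define m where "m = sqrt ((1+z)/2 * ((1-z)/2))"
  have m0: "0 \<le> m" unfolding m_def using pz by simp
  have m2: "m^2 = (1 - z^2)/4"
  proof -
    have "m^2 = (1+z)/2 * ((1-z)/2)" unfolding m_def using pz by simp
    then show ?thesis by (simp add: power2_eq_square field_simps)
  qed
  show ?thesis
  proof (cases "z'^2 \<le> z^2")
    case True
    then have azz: "\<bar>z'\<bar> \<le> \<bar>z\<bar>" by (simp add: abs_le_square_iff)
    define s where "s = (if z = 0 then 1/2 else (z+z')/(2*z))"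
    have s01: "0 \<le> s \<and> s \<le> 1"
    proof (cases "z = 0")
      case True then show ?thesis unfolding s_def by simp
    next
      case False
      show ?thesis
      proof (cases "z > 0")
        case True then show ?thesis unfolding s_def using azz False by (simp add: field_simps abs_le_iff)
      next
        case False2: False
        then have "z < 0" using False by simp
        then show ?thesis unfolding s_def using azz by (simp add: field_simps abs_le_iff)
      qed
    qed
    have sZ: "s * ((1+z)/2) + (1-s) * ((1-z)/2) = (1+z')/2"
    proof (cases "z = 0")
      case True then have "z' = 0" using azz by simp
      then show ?thesis using True unfolding s_def by simp
    next
      case False then show ?thesis unfolding s_def by (simp add: field_simps)
    qed
    define x y u v where "x = sqrt (s*((1+z)/2))" and "y = sqrt ((1-s)*((1+z)/2))"
      and "u = sqrt (s*((1-z)/2))" and "v = sqrt ((1-s)*((1-z)/2))"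
    have x2: "x^2 = s*((1+z)/2)" and y2: "y^2 = (1-s)*((1+z)/2)" and u2: "u^2 = s*((1-z)/2)"
      and v2: "v^2 = (1-s)*((1-z)/2)"
      unfolding x_def y_def u_def v_def using s01 pz by auto
    have W: "x * u + y * v = m"
    proof -
      have "x * u = sqrt (s^2 * ((1+z)/2 * ((1-z)/2)))" unfolding x_def u_def
        by (simp add: real_sqrt_mult[symmetric] power2_eq_square mult_ac)
      also have "\<dots> = s * m" unfolding m_def real_sqrt_mult[of "s^2"] real_sqrt_abs using s01 by simp
      finally have 1: "x * u = s * m" .
      have "y * v = sqrt ((1-s)^2 * ((1+z)/2 * ((1-z)/2)))" unfolding y_def v_def
        by (simp add: real_sqrt_mult[symmetric] power2_eq_square mult_ac)
      also have "\<dots> = (1-s) * m" unfolding m_def real_sqrt_mult[of "(1-s)^2"] real_sqrt_abs using s01 by simp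
      finally have 2: "y * v = (1-s) * m" .
      show ?thesis using 1 2 by (simp add: algebra_simps)
    qed
    show ?thesis
    proof (rule reach_gen[OF pz _ _ _ _ R])
      show "x^2 + y^2 = (1+z)/2" using x2 y2 by (simp add: algebra_simps)
      show "u^2 + v^2 = (1-z)/2" using u2 v2 by (simp add: algebra_simps)
      show "x^2 + v^2 = (1+z')/2" using x2 v2 sZ by simp
      show "\<bar>t\<bar> * sqrt ((1+z)/2 * ((1-z)/2)) \<le> x * u + y * v"
        unfolding W m_def[symmetric] using t1 m0 by (simp add: mult_left_le_one_le)
    qed
  next
    case False
    then have azz: "\<bar>z\<bar> < \<bar>z'\<bar>" using abs_le_square_iff[of z' z] by linarith
    then have z'0: "z' \<noteq> 0" by auto
    have zz: "\<bar>z * z'\<bar> \<le> z'^2"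
    proof -
      have "\<bar>z\<bar> * \<bar>z'\<bar> \<le> \<bar>z'\<bar> * \<bar>z'\<bar>" using azz by (intro mult_right_mono) auto
      moreover have "\<bar>z * z'\<bar> = \<bar>z\<bar> * \<bar>z'\<bar>" by (rule abs_mult)
      moreover have "\<bar>z'\<bar> * \<bar>z'\<bar> = z'^2" by (simp add: power2_eq_square)
      ultimately show ?thesis by linarith
    qed
    define k1 k2 where "k1 = z' * (z + z')" and "k2 = z' * (z' - z)"
    have k1: "0 \<le> k1"
    proof -
      have "k1 = z'^2 + z * z'" unfolding k1_def by (simp add: power2_eq_square algebra_simps)
      moreover have "- (z * z') \<le> \<bar>z * z'\<bar>" by (rule abs_ge_minus_self)
      ultimately show ?thesis using zz by linarith
    qed
    have k2: "0 \<le> k2"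
    proof -
      have "k2 = z'^2 - z * z'" unfolding k2_def by (simp add: power2_eq_square algebra_simps)
      moreover have "z * z' \<le> \<bar>z * z'\<bar>" by (rule abs_ge_self)
      ultimately show ?thesis using zz by linarith
    qed
    define D where "D = 4 * z'^2"
    have D0: "0 < D" unfolding D_def using z'0 by simp
    define X Y U V where "X = k1 * (1+z') / D" and "Y = k2 * (1-z') / D"
      and "U = k1 * (1-z') / D" and "V = k2 * (1+z') / D"
    have nn: "0 \<le> X" "0 \<le> Y" "0 \<le> U" "0 \<le> V" unfolding X_def Y_def U_def V_def
    proof -
      have a: "0 \<le> 1+z'" "0 \<le> 1-z'" using az' by auto
      show "0 \<le> k1 * (1+z') / D" using k1 a D0 by (intro divide_nonneg_pos mult_nonneg_nonneg)
      show "0 \<le> k2 * (1-z') / D" using k2 a D0 by (intro divide_nonneg_pos mult_nonneg_nonneg)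
      show "0 \<le> k1 * (1-z') / D" using k1 a D0 by (intro divide_nonneg_pos mult_nonneg_nonneg)
      show "0 \<le> k2 * (1+z') / D" using k2 a D0 by (intro divide_nonneg_pos mult_nonneg_nonneg)
    qed
    have XY: "X + Y = (1+z)/2" unfolding X_def Y_def D_def k1_def k2_def using z'0
      by (simp add: field_simps power2_eq_square)
    have UV: "U + V = (1-z)/2" unfolding U_def V_def D_def k1_def k2_def using z'0
      by (simp add: field_simps power2_eq_square)
    have XV: "X + V = (1+z')/2" unfolding X_def V_def D_def k1_def k2_def using z'0
      by (simp add: field_simps power2_eq_square)
    have XYUV: "X * Y = U * V" unfolding X_def Y_def U_def V_def by (simp add: field_simps)
    define x y u v where "x = sqrt X" and "y = sqrt Y" and "u = sqrt U" and "v = sqrt V"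
    have x2: "x^2 = X" "y^2 = Y" "u^2 = U" "v^2 = V" unfolding x_def y_def u_def v_def using nn by auto
    have W0: "0 \<le> x * u + y * v" unfolding x_def y_def u_def v_def using nn by simp
    have Wsq: "(x * u + y * v)^2 = (X + V) * (Y + U)"
    proof -
      have "(x * u) * (y * v) = sqrt ((X * Y) * (U * V))" unfolding x_def y_def u_def v_def
        by (simp add: real_sqrt_mult mult_ac)
      also have "\<dots> = X * Y" unfolding XYUV[symmetric] using nn by (simp add: real_sqrt_mult_self)
      finally have "(x * u) * (y * v) = X * Y" .
      moreover have "(x * u + y * v)^2 = x^2 * u^2 + y^2 * v^2 + 2 * ((x * u) * (y * v))"
        by (simp add: power2_eq_square algebra_simps)
      ultimately have "(x * u + y * v)^2 = X * U + Y * V + 2 * (X * Y)" using x2 by simp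
      also have "\<dots> = (X + V) * (Y + U)" using XYUV by (simp add: algebra_simps)
      finally show ?thesis .
    qed
    have YU: "Y + U = (1-z')/2" using XY UV XV by simp
    have "(\<bar>t\<bar> * m)^2 \<le> (x * u + y * v)^2"
    proof -
      have "(\<bar>t\<bar> * m)^2 = t^2 * (1 - z^2) / 4" using m2 by (simp add: power_mult_distrib)
      also have "\<dots> \<le> (1 - z'^2)/4" using tz by simp
      also have "\<dots> = (x * u + y * v)^2" unfolding Wsq XV YU by (simp add: power2_eq_square field_simps)
      finally show ?thesis .
    qed
    then have Wt: "\<bar>t\<bar> * m \<le> x * u + y * v" using W0 by (rule power2_le_imp_le)
    show ?thesis
    proof (rule reach_gen[OF pz _ _ _ _ R])
      show "x^2 + y^2 = (1+z)/2" using x2 XY by simp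
      show "u^2 + v^2 = (1-z)/2" using x2 UV by simp
      show "x^2 + v^2 = (1+z')/2" using x2 XV by simp
      show "\<bar>t\<bar> * sqrt ((1+z)/2 * ((1-z)/2)) \<le> x * u + y * v" using Wt unfolding m_def .
    qed
  qed
qed


theorem theorem2:
  fixes z r z' r' :: real
  assumes "z\<^sup>2 + r\<^sup>2 \<le> 1" and "z'\<^sup>2 + r'\<^sup>2 \<le> 1"
  shows "((\<exists>Ks. IO Ks \<and> apply_kraus Ks (qubit z r) = qubit z' r') \<longleftrightarrow>
            ((1 - z\<^sup>2) * r'\<^sup>2 \<le> (1 - z'\<^sup>2) * r\<^sup>2 \<and> \<bar>r'\<bar> \<le> \<bar>r\<bar>))
       \<and> ((\<exists>Ks. SIO Ks \<and> apply_kraus Ks (qubit z r) = qubit z' r') \<longleftrightarrow>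
            ((1 - z\<^sup>2) * r'\<^sup>2 \<le> (1 - z'\<^sup>2) * r\<^sup>2 \<and> \<bar>r'\<bar> \<le> \<bar>r\<bar>))"
proof -
  have n: "(1 - z\<^sup>2) * r'\<^sup>2 \<le> (1 - z'\<^sup>2) * r\<^sup>2 \<and> \<bar>r'\<bar> \<le> \<bar>r\<bar>"
    if "IO Ks" "apply_kraus Ks (qubit z r) = qubit z' r'" for Ks
    using necessity[OF assms(1) that] .
  have s: "\<exists>Ks. SIO Ks \<and> apply_kraus Ks (qubit z r) = qubit z' r'"
    if "(1 - z\<^sup>2) * r'\<^sup>2 \<le> (1 - z'\<^sup>2) * r\<^sup>2 \<and> \<bar>r'\<bar> \<le> \<bar>r\<bar>"
    using sufficiency[OF assms] that by blast
  show ?thesis using n s unfolding SIO_def by blast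
qed

end
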